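(* Let $Z$ be an $n\times k$ matrix and $\varepsilon\in\mathbb R^n$ such that $Z'D_\varepsilon^2Z$ is invertible, and set $V=Z(Z'D_\varepsilon^2Z)^{-1}Z'$ and $P=D_\varepsilon VD_\varepsilon$. Then for every $i=1,\dots,n$, $$V_{ii}-3V_{ii}P_{ii}+4V_{ii}P_{ii}^2-2\sum_{j=1}^nV_{ij}^2\varepsilon_j^2P_{ij}^2\;\ge\;V_{ii}(1-P_{ii})(1-2P_{ii})^2.$$
   Context: $D_\varepsilon$ is the diagonal matrix with diagonal $\varepsilon$ and $D_\varepsilon^2=D_\varepsilon D_\varepsilon$; $V_{ij}$ and $P_{ij}$ denote entries of $V$ and $P$. *)

theory Defs
  imports "HOL-Analysis.Analysis"
begin

definition diag_mat :: "real ^ 'n \<Rightarrow> real ^ 'n ^ 'n" where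
  "diag_mat e = (\<chi> i j. if i = j then e $ i else 0)"

end

theory Submission
  imports Defs
begin

lemma diag_mult_left: "(diag_mat e ** A) $ i $ j = e $ i * A $ i $ j"
proof -
  have "(diag_mat e ** A) $ i $ j = (\<Sum>k\<in>UNIV. (if i = k then e $ i else 0) * A $ k $ j)"
    by (simp add: matrix_matrix_mult_def diag_mat_def)
  also have "\<dots> = (\<Sum>k\<in>UNIV. if i = k then e $ i * A $ k $ j else 0)"
    by (rule sum.cong) auto
  also have "\<dots> = e $ i * A $ i $ j" by simp
  finally show ?thesis .
qed

lemma diag_mult_right: "(A ** diag_mat e) $ i $ j = A $ i $ j * e $ j"
proof -
  have "(A ** diag_mat e) $ i $ j = (\<Sum>k\<in>UNIV. A $ i $ k * (if k = j then e $ k else 0))"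
    by (simp add: matrix_matrix_mult_def diag_mat_def)
  also have "\<dots> = (\<Sum>k\<in>UNIV. if k = j then A $ i $ j * e $ j else 0)"
    by (rule sum.cong) auto
  also have "\<dots> = A $ i $ j * e $ j" by simp
  finally show ?thesis .
qed

lemma diag_transpose: "transpose (diag_mat e) = diag_mat e"
  by (simp add: transpose_def diag_mat_def vec_eq_iff)

theorem mainTheorem11:
  fixes Z :: "real ^ 'k ^ 'n" and \<epsilon> :: "real ^ 'n"
    and V P :: "real ^ 'n ^ 'n"
  assumes inv: "invertible (transpose Z ** (diag_mat \<epsilon> ** diag_mat \<epsilon>) ** Z)"
    and V_def: "V = Z ** matrix_inv (transpose Z ** (diag_mat \<epsilon> ** diag_mat \<epsilon>) ** Z) ** transpose Z"
    and P_def: "P = diag_mat \<epsilon> ** V ** diag_mat \<epsilon>"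
  shows "V $ i $ i - 3 * V $ i $ i * P $ i $ i + 4 * V $ i $ i * (P $ i $ i)^2
           - 2 * (\<Sum>j\<in>UNIV. (V $ i $ j)^2 * (\<epsilon> $ j)^2 * (P $ i $ j)^2)
         \<ge> V $ i $ i * (1 - P $ i $ i) * (1 - 2 * P $ i $ i)^2"
proof -
  define D where "D = diag_mat \<epsilon>"
  define M where "M = transpose Z ** (D ** D) ** Z"
  define N where "N = matrix_inv M"
  have MN: "M ** N = mat 1" and NM: "N ** M = mat 1"
    using inv unfolding M_def N_def D_def invertible_def matrix_inv_def
    by (metis (mono_tags, lifting) someI_ex)+
  have Mt: "transpose M = M"
    unfolding M_def D_def by (simp add: matrix_transpose_mul diag_transpose matrix_mul_assoc)
  have "transpose N ** M = mat 1" using MN Mt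
    by (metis matrix_transpose_mul transpose_mat)
  hence Nt: "transpose N = N"
    by (metis MN matrix_mul_assoc matrix_mul_lid matrix_mul_rid)
  have V: "V = Z ** N ** transpose Z" unfolding V_def N_def M_def D_def by simp
  have Vt: "transpose V = V" unfolding V
    by (simp add: matrix_transpose_mul Nt matrix_mul_assoc)
  have P: "P = D ** V ** D" unfolding P_def D_def by simp
  have Pij: "P $ a $ b = \<epsilon> $ a * V $ a $ b * \<epsilon> $ b" for a b
    unfolding P D_def by (simp add: diag_mult_left diag_mult_right)
  have Vsym: "V $ a $ b = V $ b $ a" for a b
    using Vt by (metis transpose_def vec_lambda_beta)
  have Psym: "P $ a $ b = P $ b $ a" for a b
    unfolding Pij using Vsym by simp
  have PP: "P ** P = P"
  proof -
    have "P ** P = D ** Z ** N ** (transpose Z ** (D ** D) ** Z) ** N ** transpose Z ** D"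
      unfolding P V by (simp add: matrix_mul_assoc)
    also have "\<dots> = D ** Z ** (N ** M) ** N ** transpose Z ** D"
      unfolding M_def by (simp add: matrix_mul_assoc)
    also have "\<dots> = P" unfolding NM P V by (simp add: matrix_mul_assoc)
    finally show ?thesis .
  qed
  define p where "p = P $ i $ i"
  have psum: "p = (\<Sum>j\<in>UNIV. (P $ i $ j)^2)"
  proof -
    have "p = (P ** P) $ i $ i" unfolding p_def PP ..
    also have "\<dots> = (\<Sum>j\<in>UNIV. P $ i $ j * P $ j $ i)" by (simp add: matrix_matrix_mult_def)
    finally show ?thesis by (simp add: Psym power2_eq_square)
  qed
  define S where "S = (\<Sum>j\<in>UNIV-{i}. (P $ i $ j)^2)"
  have split: "(\<Sum>j\<in>UNIV. f j) = f i + (\<Sum>j\<in>UNIV-{i}. f j)" for f :: "'n \<Rightarrow> real"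
    by (metis UNIV_I finite sum.remove)
  have S: "S = p - p^2" using psum split[of "\<lambda>j. (P $ i $ j)^2"] unfolding S_def p_def by simp
  have S0: "S \<ge> 0" unfolding S_def by (simp add: sum_nonneg)
  have p0: "p \<ge> 0" using psum by (simp add: sum_nonneg)
  have sq4: "(\<Sum>j\<in>UNIV-{i}. (P $ i $ j)^4) \<le> S^2"
  proof -
    have "(\<Sum>j\<in>UNIV-{i}. (P $ i $ j)^4) \<le> (\<Sum>j\<in>UNIV-{i}. (P $ i $ j)^2 * S)"
    proof (rule sum_mono)
      fix j assume j: "j \<in> UNIV - {i}"
      have "(P $ i $ j)^2 \<le> S" unfolding S_def
        by (rule member_le_sum[OF j]) auto
      hence "(P $ i $ j)^2 * (P $ i $ j)^2 \<le> (P $ i $ j)^2 * S"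
        by (rule mult_left_mono) auto
      thus "(P $ i $ j)^4 \<le> (P $ i $ j)^2 * S"
        by (simp add: power4_eq_xxxx power2_eq_square mult.assoc)
    qed
    also have "\<dots> = S^2" unfolding S_def by (simp add: sum_distrib_right power2_eq_square)
    finally show ?thesis .
  qed
  show ?thesis
  proof (cases "\<epsilon> $ i = 0")
    case True
    hence "P $ i $ j = 0" for j by (simp add: Pij)
    thus ?thesis by simp
  next
    case False
    define e where "e = \<epsilon> $ i"
    have Vii: "V $ i $ i = p / e^2" unfolding p_def Pij e_def using False
      by (simp add: power2_eq_square)
    have terms: "(V $ i $ j)^2 * (\<epsilon> $ j)^2 * (P $ i $ j)^2 = (P $ i $ j)^4 / e^2" for j
      unfolding Pij e_def using False by (simp add: field_simps power2_eq_square power4_eq_xxxx)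
    have sum: "(\<Sum>j\<in>UNIV. (V $ i $ j)^2 * (\<epsilon> $ j)^2 * (P $ i $ j)^2)
        = (p^4 + (\<Sum>j\<in>UNIV-{i}. (P $ i $ j)^4)) / e^2"
      unfolding terms using split[of "\<lambda>j. (P $ i $ j)^4 / e^2"]
      by (simp add: p_def sum_divide_distrib[symmetric] add_divide_distrib)
    have key: "p^4 + (\<Sum>j\<in>UNIV-{i}. (P $ i $ j)^4) \<le> p * (p - 2*p^2 + 2*p^3)"
      using sq4 S by (simp add: power2_eq_square power3_eq_cube power4_eq_xxxx algebra_simps)
    have e2: "e^2 > 0" using False e_def by simp
    define T where "T = (\<Sum>j\<in>UNIV-{i}. (P $ i $ j)^4)"
    have eq: "p / e^2 - 3 * (p / e^2) * p + 4 * (p / e^2) * p^2 - 2 * ((p^4 + T) / e^2)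
        - (p / e^2) * (1 - p) * (1 - 2 * p)^2
        = (2 / e^2) * (p * (p - 2*p^2 + 2*p^3) - (p^4 + T))"
      using False unfolding e_def[symmetric] by (simp add: field_simps power2_eq_square power3_eq_cube power4_eq_xxxx)
    have "(2 / e^2) * (p * (p - 2*p^2 + 2*p^3) - (p^4 + T)) \<ge> 0"
      using key e2 unfolding T_def by simp
    hence "p / e^2 - 3 * (p / e^2) * p + 4 * (p / e^2) * p^2 - 2 * ((p^4 + T) / e^2)
        \<ge> (p / e^2) * (1 - p) * (1 - 2 * p)^2" using eq by linarith
    thus ?thesis unfolding sum Vii p_def[symmetric] T_def .
  qed
qed

end
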